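(* (i) For all $d\ge 0$, $1\le r\le d+1$ and $0\le j\le\lfloor (d-2)/2\rfloor$: $A(d+1,j,r)\le A(d+1,d-1-j,r)$. (ii) For all $d\ge1$ and $1\le r\le d$: $$A(d+1,0,r+1)\le A(d+1,1,r+1)\le\dots\le A(d+1,\lfloor d/2\rfloor,r+1)$$ and $$A(d+1,d,r+1)\le A(d+1,d-1,r+1)\le\dots\le A(d+1,\lceil d/2\rceil,r+1).$$
   Context: $S_d$ is the symmetric group on $[d]=\{1,\dots,d\}$. For $\sigma\in S_d$, its descent set is $D(\sigma)=\{i\in[d-1]:\sigma(i)>\sigma(i+1)\}$ and $\mathrm{des}(\sigma)=\#D(\sigma)$. For $0\le i\le d-1$ and $1\le j\le d$, $A(d,i,j)=\#\{\sigma\in S_d:\mathrm{des}(\sigma)=i,\ \sigma(1)=j\}$. *)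

theory Defs
  imports "HOL-Combinatorics.Permutations"
begin

definition descent_set :: "nat \<Rightarrow> (nat \<Rightarrow> nat) \<Rightarrow> nat set" where
  "descent_set d \<sigma> = {i \<in> {1..d - 1}. \<sigma> i > \<sigma> (i + 1)}"

definition des :: "nat \<Rightarrow> (nat \<Rightarrow> nat) \<Rightarrow> nat" where
  "des d \<sigma> = card (descent_set d \<sigma>)"

definition A :: "nat \<Rightarrow> nat \<Rightarrow> nat \<Rightarrow> nat" where
  "A d i j = card {\<sigma>. \<sigma> permutes {1..d} \<and> des d \<sigma> = i \<and> \<sigma> 1 = j}"

end

theory Submission
  imports Defs "HOL-Combinatorics.Multiset_Permutations"
begin


fun ldes :: "nat list \<Rightarrow> nat" where
  "ldes (x#y#zs) = (if y < x then 1 else 0) + ldes (y#zs)"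
| "ldes _ = 0"

lemma ldes_card: "ldes xs = card {p. 0 < p \<and> p < length xs \<and> xs!p < xs!(p-1)}"
proof (induction xs rule: ldes.induct)
  case (1 x y zs)
  let ?S = "\<lambda>xs::nat list. {p. 0 < p \<and> p < length xs \<and> xs!p < xs!(p-1)}"
  have e: "?S (x#y#zs) = (if y < x then {1} else {}) \<union> Suc ` ?S (y#zs)"
  proof (rule set_eqI)
    fix p show "p \<in> ?S (x#y#zs) \<longleftrightarrow> p \<in> (if y < x then {1} else {}) \<union> Suc ` ?S (y#zs)"
    proof (cases p)
      case 0 then show ?thesis by auto
    next
      case (Suc q) then show ?thesis
        by (cases q) (auto simp: image_iff)
    qed
  qed
  have fin: "finite (?S (y#zs))" by (rule finite_subset[of _ "{..<length (y#zs)}"]) auto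
  have d: "(if y < x then {1::nat} else {}) \<inter> Suc ` ?S (y#zs) = {}" by auto
  have "card (?S (x#y#zs)) = card (if y < x then {1::nat} else {}) + card (Suc ` ?S (y#zs))"
    unfolding e by (rule card_Un_disjoint) (use fin d in auto)
  also have "card (Suc ` ?S (y#zs)) = card (?S (y#zs))" by (simp add: card_image)
  finally show ?case using 1 by simp
next
  case ("2_1") show ?case by simp
next
  case ("2_2" v)
  have "{p. 0 < p \<and> p < length [v] \<and> [v]!p < [v]!(p-1)} = {}" by auto
  then show ?case by simp
qed

lemma ldes_le: "ldes xs \<le> length xs - 1"
  by (induction xs rule: ldes.induct) auto

lemma ldes_cons: "ldes (a # xs) = (if xs = [] then 0 else (if hd xs < a then 1 else 0)) + ldes xs"
  by (cases xs) auto

lemma ldes_ins: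
  assumes "\<forall>y\<in>set ys. y < m" "1 \<le> p" "p \<le> length ys"
  shows "ldes (take p ys @ m # drop p ys) = ldes ys + (if p < length ys \<and> \<not> ys!p < ys!(p-1) then 1 else 0)"
  using assms
proof (induction ys arbitrary: p)
  case Nil then show ?case by simp
next
  case (Cons a zs)
  show ?case
  proof (cases "p = 1")
    case True
    then show ?thesis using Cons.prems by (cases zs) auto
  next
    case False
    then obtain q where q: "p = Suc q" "1 \<le> q" "q \<le> length zs" using Cons.prems by (cases p) auto
    have IH: "ldes (take q zs @ m # drop q zs) = ldes zs + (if q < length zs \<and> \<not> zs!q < zs!(q-1) then 1 else 0)"
      using Cons.IH[of q] Cons.prems q by auto
    have ne: "zs \<noteq> []" using q by auto
    have hd: "hd (take q zs @ m # drop q zs) = hd zs" using q ne by (cases zs) auto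
    have "take p (a#zs) @ m # drop p (a#zs) = a # (take q zs @ m # drop q zs)" using q by simp
    then have "ldes (take p (a#zs) @ m # drop p (a#zs)) = (if hd zs < a then 1 else 0) + ldes (take q zs @ m # drop q zs)"
      using hd by (simp add: ldes_cons)
    also have "\<dots> = ldes (a#zs) + (if q < length zs \<and> \<not> zs!q < zs!(q-1) then 1 else 0)"
      using IH ne by (simp add: ldes_cons)
    finally show ?thesis using q by (cases q) auto
  qed
qed

lemma ldes_compl:
  assumes "distinct xs" "\<forall>x\<in>set xs. x \<le> m"
  shows "ldes xs + ldes (map (\<lambda>x. m - x) xs) = length xs - 1"
  using assms
proof (induction xs rule: ldes.induct)
  case (1 x y zs)
  then have "ldes (y#zs) + ldes (map (\<lambda>x. m - x) (y#zs)) = length (y#zs) - 1" by auto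
  moreover have "x \<noteq> y" "x \<le> m" "y \<le> m" using 1 by auto
  ultimately show ?case by auto
qed auto



definition PL :: "nat \<Rightarrow> nat list set" where "PL n = {xs. distinct xs \<and> set xs = {1..n}}"

lemma PL_perm: "PL n = permutations_of_set {1..n}"
  by (auto simp: PL_def permutations_of_set_def)

lemma finite_PL[simp]: "finite (PL n)" by (simp add: PL_perm)

lemma PL_length: "xs \<in> PL n \<Longrightarrow> length xs = n"
proof -
  assume "xs \<in> PL n"
  then have "distinct xs" "set xs = {1..n}" by (auto simp: PL_def)
  then have "length xs = card {1..n}" by (metis distinct_card)
  then show ?thesis by simp
qed

definition AL :: "nat \<Rightarrow> nat \<Rightarrow> nat \<Rightarrow> nat" where
  "AL n i r = card {xs \<in> PL n. ldes xs = i \<and> hd xs = r}"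

lemma AL_zero: "1 \<le> n \<Longrightarrow> n \<le> i \<Longrightarrow> AL n i r = 0"
proof -
  assume "1 \<le> n" "n \<le> i"
  then have "{xs \<in> PL n. ldes xs = i \<and> hd xs = r} = {}"
  proof -
    have "ldes xs < i" if "xs \<in> PL n" for xs
      using ldes_le[of xs] PL_length[OF that] \<open>1 \<le> n\<close> \<open>n \<le> i\<close> by linarith
    then show ?thesis by auto
  qed
  then show ?thesis by (simp add: AL_def)
qed


lemma AL_compl:
  assumes "1 \<le> r" "r \<le> n" "i \<le> n - 1"
  shows "AL n i r = AL n (n - 1 - i) (Suc n - r)"
proof -
  let ?c = "map (\<lambda>x. Suc n - x)"
  let ?S = "{xs \<in> PL n. ldes xs = i \<and> hd xs = r}"
  let ?T = "{xs \<in> PL n. ldes xs = n - 1 - i \<and> hd xs = Suc n - r}"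
  have inv: "?c (?c xs) = xs" if "xs \<in> PL n" for xs
  proof -
    have "\<forall>x\<in>set xs. Suc n - (Suc n - x) = x" using that by (auto simp: PL_def)
    then show ?thesis by (induction xs) auto
  qed
  have cPL: "?c xs \<in> PL n" if "xs \<in> PL n" for xs
  proof -
    have "inj_on (\<lambda>x. Suc n - x) (set xs)" using that by (auto simp: PL_def inj_on_def)
    moreover have "(\<lambda>x. Suc n - x) ` {1..n} = {1..n}"
    proof
      show "(\<lambda>x. Suc n - x) ` {1..n} \<subseteq> {1..n}" by auto
      show "{1..n} \<subseteq> (\<lambda>x. Suc n - x) ` {1..n}"
      proof
        fix y assume "y \<in> {1..n}"
        then have "y = Suc n - (Suc n - y)" "Suc n - y \<in> {1..n}" by auto
        then show "y \<in> (\<lambda>x. Suc n - x) ` {1..n}" by blast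
      qed
    qed
    ultimately show ?thesis using that by (auto simp: PL_def distinct_map)
  qed
  have dsum: "ldes xs + ldes (?c xs) = n - 1" if "xs \<in> PL n" for xs
    using ldes_compl[of xs "Suc n"] that PL_length[OF that] by (auto simp: PL_def)
  have hdc: "hd (?c xs) = Suc n - hd xs" if "xs \<in> PL n" "1 \<le> n" for xs
    using that PL_length[OF that(1)] by (cases xs) auto
  have n1: "1 \<le> n" using assms by simp
  have "bij_betw ?c ?S ?T"
  proof (rule bij_betw_byWitness[where f'="?c"])
    show "\<forall>a\<in>?S. ?c (?c a) = a" using inv by auto
    show "\<forall>a\<in>?T. ?c (?c a) = a" using inv by auto
    show "?c ` ?S \<subseteq> ?T"
    proof
      fix y assume "y \<in> ?c ` ?S"
      then obtain xs where xs: "xs \<in> ?S" "y = ?c xs" by blast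
      have "ldes y = n - 1 - i" using dsum[of xs] xs by auto
      moreover have "hd y = Suc n - r" using hdc[of xs] xs n1 by auto
      ultimately show "y \<in> ?T" using cPL xs by auto
    qed
    show "?c ` ?T \<subseteq> ?S"
    proof
      fix y assume "y \<in> ?c ` ?T"
      then obtain xs where xs: "xs \<in> ?T" "y = ?c xs" by blast
      have "ldes y = i" using dsum[of xs] xs assms by auto
      moreover have "hd y = r" using hdc[of xs] xs n1 assms by auto
      ultimately show "y \<in> ?S" using cPL xs by auto
    qed
  qed
  then show ?thesis unfolding AL_def by (rule bij_betw_same_card)
qed


declare upt_Suc[simp del]

lemma A_AL:
  assumes "1 \<le> n"
  shows "A n i r = AL n i r"
proof -
  let ?f = "\<lambda>\<sigma>::nat\<Rightarrow>nat. map \<sigma> [1..<n+1]"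
  let ?S = "{\<sigma>. \<sigma> permutes {1..n} \<and> des n \<sigma> = i \<and> \<sigma> 1 = r}"
  let ?T = "{xs \<in> PL n. ldes xs = i \<and> hd xs = r}"
  have des_eq: "des n \<sigma> = ldes (?f \<sigma>)" for \<sigma>
  proof -
    have "descent_set n \<sigma> = {p. 0 < p \<and> p < length (?f \<sigma>) \<and> ?f \<sigma> ! p < ?f \<sigma> ! (p-1)}"
      unfolding descent_set_def
    proof (rule set_eqI)
      fix p
      show "p \<in> {i \<in> {1..n - 1}. \<sigma> (i + 1) < \<sigma> i} \<longleftrightarrow> p \<in> {p. 0 < p \<and> p < length (?f \<sigma>) \<and> ?f \<sigma> ! p < ?f \<sigma> ! (p-1)}"
      proof -
        have nth: "?f \<sigma> ! q = \<sigma> (Suc q)" if "q < n" for q using that by (simp del: upt_Suc)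
        have len: "length (?f \<sigma>) = n" by (simp del: upt_Suc)
        show ?thesis
        proof (cases p)
          case 0 then show ?thesis by simp
        next
          case (Suc q)
          show ?thesis
          proof
            assume "p \<in> {i \<in> {1..n - 1}. \<sigma> (i + 1) < \<sigma> i}"
            then have "p < n" "\<sigma> (Suc p) < \<sigma> p" by auto
            then show "p \<in> {p. 0 < p \<and> p < length (?f \<sigma>) \<and> ?f \<sigma> ! p < ?f \<sigma> ! (p-1)}"
              using nth[of p] nth[of q] Suc len by simp
          next
            assume "p \<in> {p. 0 < p \<and> p < length (?f \<sigma>) \<and> ?f \<sigma> ! p < ?f \<sigma> ! (p-1)}"
            then have "p < n" "?f \<sigma> ! p < ?f \<sigma> ! q" using Suc len by auto
            then show "p \<in> {i \<in> {1..n - 1}. \<sigma> (i + 1) < \<sigma> i}"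
              using nth[of p] nth[of q] Suc by simp
          qed
        qed
      qed
    qed
    then show ?thesis by (simp add: des_def ldes_card)
  qed
  have hd_eq: "hd (?f \<sigma>) = \<sigma> 1" for \<sigma>
    using assms by (simp add: hd_map upt_rec)
  have "bij_betw ?f ?S ?T"
  proof (rule bij_betw_imageI)
    show "inj_on ?f ?S"
    proof (rule inj_onI)
      fix \<sigma> \<tau> assume s: "\<sigma> \<in> ?S" and t: "\<tau> \<in> ?S" and eq: "?f \<sigma> = ?f \<tau>"
      show "\<sigma> = \<tau>"
      proof
        fix k
        show "\<sigma> k = \<tau> k"
        proof (cases "k \<in> {1..n}")
          case True
          then have "?f \<sigma> ! (k-1) = \<sigma> k" "?f \<tau> ! (k-1) = \<tau> k" by auto
          then show ?thesis using eq by metis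
        next
          case False
          have "\<sigma> permutes {1..n}" "\<tau> permutes {1..n}" using s t by auto
          then show ?thesis using False permutes_not_in by metis
        qed
      qed
    qed
    show "?f ` ?S = ?T"
    proof
      show "?f ` ?S \<subseteq> ?T"
      proof
        fix xs assume "xs \<in> ?f ` ?S"
        then obtain \<sigma> where s: "\<sigma> \<in> ?S" and xs: "xs = ?f \<sigma>" by blast
        have p: "\<sigma> permutes {1..n}" using s by simp
        have "distinct xs" unfolding xs distinct_map
          using permutes_inj_on[OF p] by (simp add: atLeastLessThanSuc_atLeastAtMost)
        moreover have "set xs = {1..n}" unfolding xs
          using permutes_image[OF p] by (simp add: atLeastLessThanSuc_atLeastAtMost)
        ultimately show "xs \<in> ?T" using s xs des_eq hd_eq by (auto simp: PL_def)
      qed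
      show "?T \<subseteq> ?f ` ?S"
      proof
        fix xs assume x: "xs \<in> ?T"
        then have d: "distinct xs" and st: "set xs = {1..n}" and len: "length xs = n"
          using PL_length by (auto simp: PL_def)
        define \<sigma> where "\<sigma> k = (if k \<in> {1..n} then xs ! (k-1) else k)" for k
        have fx: "?f \<sigma> = xs"
          by (rule nth_equalityI) (auto simp: len \<sigma>_def nth_append)
        have "bij_betw \<sigma> {1..n} {1..n}"
        proof (rule bij_betw_imageI)
          show "inj_on \<sigma> {1..n}"
          proof (rule inj_onI)
            fix a b assume a: "a \<in> {1..n}" and b: "b \<in> {1..n}" and e: "\<sigma> a = \<sigma> b"
            then have "xs ! (a-1) = xs ! (b-1)" by (simp add: \<sigma>_def)
            moreover have "a - 1 < length xs" "b - 1 < length xs" using a b len by auto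
            ultimately have "a - 1 = b - 1" using d nth_eq_iff_index_eq by blast
            then show "a = b" using a b by (cases a; cases b) auto
          qed
          show "\<sigma> ` {1..n} = {1..n}"
          proof -
            have "\<sigma> ` {1..n} = (\<lambda>k. xs ! (k-1)) ` {1..n}" by (auto simp: \<sigma>_def)
            also have "\<dots> = (\<lambda>k. xs ! k) ` {..<n}"
            proof -
              have "{1..n} = Suc ` {0..<n}" by (simp add: atLeastLessThanSuc_atLeastAtMost)
              then have "{1..n} = Suc ` {..<n}" by (simp add: atLeast0LessThan)
              then show ?thesis by (simp add: image_image)
            qed
            also have "\<dots> = set xs" using len by (auto simp: set_conv_nth)
            finally show ?thesis using st by simp
          qed
        qed
        then have "\<sigma> permutes {1..n}" by (rule bij_imp_permutes) (auto simp: \<sigma>_def)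
        then have "\<sigma> \<in> ?S" using x fx des_eq hd_eq by auto
        then show "xs \<in> ?f ` ?S" using fx by force
      qed
    qed
  qed
  then show ?thesis unfolding A_def AL_def by (rule bij_betw_same_card)
qed





lemma AL_rec:
  assumes r1: "1 \<le> r" and rn: "r \<le> n"
  shows "AL (Suc n) i r = (i+1) * AL n i r + (if i = 0 then 0 else (n-i) * AL n (i-1) r)"
proof -
  define ins where "ins ys p = take p ys @ Suc n # drop p ys" for ys :: "nat list" and p :: nat
  define c where "c ys p = (if p < n \<and> \<not> ys!p < ys!(p-1) then 1 else (0::nat))" for ys :: "nat list" and p :: nat
  define Q where "Q = {ys \<in> PL n. hd ys = r}"
  define F where "F ys = {p \<in> {1..n}. ldes ys + c ys p = i}" for ys
  define T where "T = {xs \<in> PL (Suc n). ldes xs = i \<and> hd xs = r}"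
  have n1: "1 \<le> n" using assms by simp
  have ldi: "ldes (ins ys p) = ldes ys + c ys p" if "ys \<in> PL n" "p \<in> {1..n}" for ys p
  proof -
    have "\<forall>y\<in>set ys. y < Suc n" using that by (auto simp: PL_def)
    then show ?thesis using ldes_ins[of ys "Suc n" p] that PL_length[OF that(1)]
      by (simp add: ins_def c_def)
  qed
  have bij: "bij_betw (\<lambda>(ys,p). ins ys p) (Sigma Q F) T"
  proof (rule bij_betw_imageI)
    show "inj_on (\<lambda>(ys,p). ins ys p) (Sigma Q F)"
    proof (rule inj_onI)
      fix a b assume a: "a \<in> Sigma Q F" and b: "b \<in> Sigma Q F"
        and e: "(\<lambda>(ys,p). ins ys p) a = (\<lambda>(ys,p). ins ys p) b"
      obtain ys p where ap: "a = (ys,p)" by (cases a)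
      obtain zs q where bq: "b = (zs,q)" by (cases b)
      have ys: "ys \<in> PL n" "p \<in> {1..n}" using a ap by (auto simp: Q_def F_def)
      have zs: "zs \<in> PL n" "q \<in> {1..n}" using b bq by (auto simp: Q_def F_def)
      have ny: "Suc n \<notin> set ys" using ys by (auto simp: PL_def)
      have eq: "take p ys @ Suc n # drop p ys = take q zs @ Suc n # drop q zs"
        using e ap bq by (simp add: ins_def)
      have n1: "Suc n \<notin> set (take p ys)" "Suc n \<notin> set (drop p ys)"
        using ny by (auto dest: in_set_takeD in_set_dropD)
      have td: "take p ys = take q zs \<and> drop p ys = drop q zs"
        using append_Cons_eq_iff[OF n1, of "take q zs" "drop q zs"] eq by simp
      then have t: "take p ys = take q zs" and d: "drop p ys = drop q zs" by auto
      have "ys = zs" using t d append_take_drop_id[of p ys] append_take_drop_id[of q zs] by metis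
      moreover have "p = q"
      proof -
        have "length (take p ys) = p" using ys PL_length[OF ys(1)] by simp
        moreover have "length (take q zs) = q" using zs PL_length[OF zs(1)] by simp
        ultimately show ?thesis using t by metis
      qed
      ultimately show "a = b" using ap bq by simp
    qed
    show "(\<lambda>(ys,p). ins ys p) ` Sigma Q F = T"
    proof
      show "(\<lambda>(ys,p). ins ys p) ` Sigma Q F \<subseteq> T"
      proof
        fix xs assume "xs \<in> (\<lambda>(ys,p). ins ys p) ` Sigma Q F"
        then obtain ys p where yp: "ys \<in> Q" "p \<in> F ys" "xs = ins ys p" by auto
        have ys: "ys \<in> PL n" "hd ys = r" using yp by (auto simp: Q_def)
        have p: "p \<in> {1..n}" "ldes ys + c ys p = i" using yp by (auto simp: F_def)
        have len: "length ys = n" using PL_length[OF ys(1)] .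
        have ny: "Suc n \<notin> set ys" using ys by (auto simp: PL_def)
        have "distinct (take p ys @ drop p ys)" using ys by (simp add: PL_def)
        then have "distinct xs" using ny unfolding yp(3) ins_def
          by (auto dest: in_set_takeD in_set_dropD simp del: append_take_drop_id)
        moreover have "set xs = {1..Suc n}"
        proof -
          have "set xs = insert (Suc n) (set (take p ys) \<union> set (drop p ys))" by (auto simp: yp(3) ins_def)
          also have "set (take p ys) \<union> set (drop p ys) = set ys" by (metis append_take_drop_id set_append)
          finally show ?thesis using ys by (auto simp: PL_def)
        qed
        moreover have "ldes xs = i" using ldi[OF ys(1) p(1)] p yp(3) by simp
        moreover have "hd xs = r"
        proof -
          obtain y ys' where "ys = y # ys'" using len n1 by (cases ys) auto
          then show ?thesis using p ys yp(3) by (cases p) (auto simp: ins_def)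
        qed
        ultimately show "xs \<in> T" by (simp add: T_def PL_def)
      qed
      show "T \<subseteq> (\<lambda>(ys,p). ins ys p) ` Sigma Q F"
      proof
        fix xs assume x: "xs \<in> T"
        then have d: "distinct xs" and st: "set xs = {1..Suc n}" and ld: "ldes xs = i" and h: "hd xs = r"
          by (auto simp: T_def PL_def)
        have "Suc n \<in> set xs" using st by simp
        then obtain us vs where uv: "xs = us @ Suc n # vs" by (meson split_list)
        have "us \<noteq> []" using uv h rn by auto
        define ys where "ys = us @ vs"
        define p where "p = length us"
        have insx: "ins ys p = xs" by (simp add: ins_def ys_def p_def uv)
        have dys: "distinct ys" using d uv by (simp add: ys_def)
        have "Suc n \<notin> set ys" using d uv by (simp add: ys_def)
        then have "set ys = set xs - {Suc n}" using uv by (auto simp: ys_def)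
        also have "\<dots> = {1..n}" using st by auto
        finally have sys: "set ys = {1..n}" .
        have ysPL: "ys \<in> PL n" using dys sys by (simp add: PL_def)
        have hys: "hd ys = r" using h uv \<open>us \<noteq> []\<close> by (simp add: ys_def)
        have "length ys = n" using PL_length[OF ysPL] .
        then have pn: "p \<in> {1..n}" using \<open>us \<noteq> []\<close>
          by (auto simp: p_def ys_def Suc_le_eq)
        have "ldes ys + c ys p = i" using ldi[OF ysPL pn] insx ld by simp
        then have "(ys,p) \<in> Sigma Q F" using ysPL hys pn by (simp add: Q_def F_def)
        then show "xs \<in> (\<lambda>(ys,p). ins ys p) ` Sigma Q F" using insx by force
      qed
    qed
  qed
  define g where "g k = (if k = i then i+1 else if 0 < i \<and> k = i-1 then n-i else 0)" for k
  have cardF: "card (F ys) = g (ldes ys)" if ys: "ys \<in> PL n" for ys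
  proof -
    define D where "D = {p. 0 < p \<and> p < n \<and> ys!p < ys!(p-1)}"
    have len: "length ys = n" using PL_length[OF ys] .
    have cD: "card D = ldes ys" using ldes_card[of ys] len by (simp add: D_def)
    have Dsub: "D \<subseteq> {1..<n}" by (auto simp: D_def)
    have finD: "finite D" using Dsub finite_subset by blast
    have c01: "c ys p = (if p \<in> {1..<n} - D then 1 else 0)" if "p \<in> {1..n}" for p
      using that by (auto simp: c_def D_def)
    show ?thesis
    proof (cases "ldes ys = i")
      case True
      have "F ys = insert n D"
        using Dsub n1 True by (auto simp: F_def c01 D_def)
      moreover have "n \<notin> D" using Dsub by auto
      ultimately show ?thesis using True cD finD by (simp add: g_def)
    next
      case False
      show ?thesis
      proof (cases "0 < i \<and> ldes ys = i - 1")
        case True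
        have "F ys = {1..<n} - D"
          using Dsub True by (auto simp: F_def c01 split: if_splits)
        then have "card (F ys) = card {1..<n} - card D" using Dsub finD by (simp add: card_Diff_subset)
        then show ?thesis using True False cD by (simp add: g_def)
      next
        case False2: False
        have "F ys = {}" using False False2 by (auto simp: F_def c_def)
        then show ?thesis using False False2 by (auto simp: g_def)
      qed
    qed
  qed
  have finQ: "finite Q" by (simp add: Q_def)
  have finF: "\<forall>a\<in>Q. finite (F a)" by (simp add: F_def)
  have "AL (Suc n) i r = card T" by (simp add: AL_def T_def)
  also have "\<dots> = card (Sigma Q F)" using bij_betw_same_card[OF bij] by simp
  also have "\<dots> = (\<Sum>ys\<in>Q. card (F ys))" using finQ finF by simp
  also have "\<dots> = (\<Sum>ys\<in>Q. (if ldes ys = i then i+1 else 0) + (if 0 < i \<and> ldes ys = i-1 then n-i else 0))"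
    by (rule sum.cong) (auto simp: cardF Q_def g_def)
  also have "\<dots> = (\<Sum>ys\<in>Q. (if ldes ys = i then i+1 else 0)) + (\<Sum>ys\<in>Q. (if 0 < i \<and> ldes ys = i-1 then n-i else 0))"
    by (rule sum.distrib)
  also have "(\<Sum>ys\<in>Q. (if ldes ys = i then i+1 else 0)) = (\<Sum>ys\<in>{ys\<in>Q. ldes ys = i}. i+1)"
    by (simp only: sum.inter_filter[OF finQ])
  also have "\<dots> = (i+1) * AL n i r"
    by (simp add: AL_def Q_def conj_commute conj_left_commute)
  also have "(\<Sum>ys\<in>Q. (if 0 < i \<and> ldes ys = i-1 then n-i else 0)) = (\<Sum>ys\<in>{ys\<in>Q. 0 < i \<and> ldes ys = i-1}. n-i)"
    by (simp only: sum.inter_filter[OF finQ])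
  also have "\<dots> = (if i = 0 then 0 else (n-i) * AL n (i-1) r)"
    by (simp add: AL_def Q_def conj_commute conj_left_commute)
  finally show ?thesis .
qed



definition invP :: "nat \<Rightarrow> (nat \<Rightarrow> nat) \<Rightarrow> bool" where
  "invP n h \<longleftrightarrow> (\<forall>i. n \<le> i \<longrightarrow> h i = 0)
     \<and> (\<forall>j. 2*j+2 \<le> n-1 \<longrightarrow> h j \<le> h (n-2-j))
     \<and> (\<forall>j. 2*j+2 \<le> n-1 \<longrightarrow> h (n-1-j) \<le> h (j+1))
     \<and> (\<forall>i. i+1 \<le> (n-1) div 2 \<longrightarrow> h i \<le> h (i+1))
     \<and> (\<forall>i. n div 2 \<le> i \<longrightarrow> h (i+1) \<le> h i)"

definition TT :: "nat \<Rightarrow> (nat \<Rightarrow> nat) \<Rightarrow> nat \<Rightarrow> nat" where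
  "TT n h i = (i+1) * h i + (if i = 0 then 0 else (n-i) * h (i-1))"

lemma inv_T:
  assumes n1: "1 \<le> n" and I: "invP n h"
  shows "invP (Suc n) (TT n h)"
proof -
  have I0: "\<And>i. n \<le> i \<Longrightarrow> h i = 0"
    and I1: "\<And>j. 2*j+2 \<le> n-1 \<Longrightarrow> h j \<le> h (n-2-j)"
    and I2: "\<And>j. 2*j+2 \<le> n-1 \<Longrightarrow> h (n-1-j) \<le> h (j+1)"
    and I3: "\<And>i. i+1 \<le> (n-1) div 2 \<Longrightarrow> h i \<le> h (i+1)"
    and I4: "\<And>i. n div 2 \<le> i \<Longrightarrow> h (i+1) \<le> h i"
    using I unfolding invP_def by blast+
  let ?g = "TT n h"
  have P0: "?g i = 0" if "Suc n \<le> i" for i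
    using that I0[of i] I0[of "i-1"] by (simp add: TT_def)
  have P1: "?g j \<le> ?g (Suc n - 2 - j)" if j: "2*j+2 \<le> Suc n - 1" for j
  proof -
    have k: "Suc n - 2 - j = n-1-j" by simp
    have k1: "n-1-j \<noteq> 0" "Suc (n-1-j) = n-j" "n - (n-1-j) = j+1" "n-1-j-1 = n-2-j" using j by linarith+
    have e: "?g (n-1-j) = (n-j)*h(n-1-j) + (j+1)*h(n-2-j)"
      using k1 by (simp add: TT_def)
    have a: "h j \<le> h (n-2-j)"
    proof (cases "2*j+2 \<le> n-1")
      case True then show ?thesis using I1 by blast
    next
      case False then have "n-2-j = j" using j by simp
      then show ?thesis by simp
    qed
    have b: "(if j = 0 then 0 else (n-j) * h (j-1)) \<le> (n-j)*h(n-1-j)"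
    proof (cases "j = 0")
      case False
      have "h (j-1) \<le> h (n-2-(j-1))" using I1[of "j-1"] j False by simp
      moreover have "n-2-(j-1) = n-1-j" using j False by simp
      ultimately show ?thesis using False by simp
    qed simp
    have "?g j = (j+1) * h j + (if j = 0 then 0 else (n-j) * h (j-1))" by (simp add: TT_def)
    also have "\<dots> \<le> (j+1) * h (n-2-j) + (n-j)*h(n-1-j)"
      using a b by (intro add_mono mult_le_mono2) auto
    finally show ?thesis using e k by simp
  qed
  have P2: "?g (Suc n - 1 - j) \<le> ?g (j+1)" if j: "2*j+2 \<le> Suc n - 1" for j
  proof -
    have k1: "Suc n - 1 - j = n - j" "n - j \<noteq> 0" "Suc (n-j) = (n-j-1) + 2" "n - (n-j) = j" "n-j-1 = n-1-j"
      using j by auto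
    have e1: "?g (n-j) = (n-j+1)*h(n-j) + j*h(n-j-1)" using k1 by (simp add: TT_def)
    have e2: "?g (j+1) = (j+2)*h(j+1) + (n-j-1)*h j" by (simp add: TT_def)
    have a: "h (n-j) \<le> h j"
    proof (cases "j = 0")
      case True then show ?thesis using I0[of n] by simp
    next
      case False
      have "h (n-1-(j-1)) \<le> h (j-1+1)" using I2[of "j-1"] j False by simp
      moreover have "n-1-(j-1) = n-j" "j-1+1 = j" using j False by auto
      ultimately show ?thesis by simp
    qed
    have b: "h (n-j-1) \<le> h (j+1)"
    proof (cases "2*j+2 \<le> n-1")
      case True then show ?thesis using I2[of j] by simp
    next
      case False then have "n-j-1 = j+1" using j by simp
      then show ?thesis by simp
    qed
    have c: "h (n-j) \<le> h (n-j-1)"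
      using I4[of "n-j-1"] j k1 by simp
    have "?g (n-j) = (n-j-1)*h(n-j) + 2*h(n-j) + j*h(n-j-1)"
      using e1 k1 by (simp add: algebra_simps)
    also have "\<dots> \<le> (n-j-1)*h j + 2*h(j+1) + j*h(j+1)"
      using a b c by (intro add_mono mult_le_mono2) auto
    also have "\<dots> = ?g (j+1)" using e2 by (simp add: algebra_simps)
    finally show ?thesis using k1 by simp
  qed
  have P3: "?g i \<le> ?g (i+1)" if i: "i+1 \<le> (Suc n - 1) div 2" for i
  proof -
    have e2: "?g (i+1) = (i+2)*h(i+1) + (n-i-1)*h i" by (simp add: TT_def)
    have e1: "?g i = (i+1) * h i + (if i = 0 then 0 else (n-i) * h (i-1))" by (simp add: TT_def)
    show ?thesis
    proof (cases "i+1 \<le> (n-1) div 2")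
      case True
      have a: "h i \<le> h (i+1)" using I3 True by blast
      have b: "(if i = 0 then 0 else (n-i) * h (i-1)) \<le> (n-i) * h i"
      proof (cases "i = 0")
        case False then show ?thesis using I3[of "i-1"] True by simp
      qed simp
      have "?g i \<le> (i+1) * h i + (n-i) * h i" using e1 b by simp
      also have "\<dots> = (i+2) * h i + (n-i-1)*h i"
      proof -
        have s: "(i+1)+(n-i) = (i+2)+(n-i-1)" using i by simp
        show ?thesis by (metis s add_mult_distrib)
      qed
      also have "\<dots> \<le> (i+2)*h(i+1) + (n-i-1)*h i" using a by (intro add_mono mult_le_mono2) auto
      finally show ?thesis using e2 by simp
    next
      case False
      have n2: "n = 2*(i+1)" using False i by presburger
      define e where "e = i+1"
      have ne: "n = 2*e" "i = e - 1" "1 \<le> e" using n2 by (auto simp: e_def)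
      have "(if i = 0 then 0 else (n-i) * h (i-1)) \<le> (n-i) * h (i+1)"
      proof (cases "i = 0")
        case False
        have "h (i-1) \<le> h (n-2-(i-1))" using I1[of "i-1"] ne False by simp
        moreover have "n-2-(i-1) = i+1" using ne False by simp
        ultimately show ?thesis using False by simp
      qed simp
      moreover have "n - i = i+2" "n-i-1 = i+1" using ne by auto
      ultimately show ?thesis using e1 e2 by simp
    qed
  qed
  have P4: "?g (i+1) \<le> ?g i" if i: "Suc n div 2 \<le> i" for i
  proof (cases "n \<le> i")
    case True
    then show ?thesis using I0 by (simp add: TT_def)
  next
    case False
    have i0: "i \<noteq> 0" using i n1 by auto
    have e2: "?g (i+1) = (i+2)*h(i+1) + (n-i-1)*h i" by (simp add: TT_def)
    have e1: "?g i = (i+1) * h i + (n-i) * h (i-1)" using i0 by (simp add: TT_def)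
    show ?thesis
    proof (cases "n div 2 \<le> i - 1")
      case True
      have a: "h (i+1) \<le> h i" using I4 i by simp
      have b: "h i \<le> h (i-1)" using I4[OF True] i0 by simp
      have "?g (i+1) \<le> (i+2)*h i + (n-i-1)*h i" unfolding e2 using a by (intro add_mono mult_le_mono2) auto
      also have "\<dots> = (i+1) * h i + (n-i) * h i"
      proof -
        have s: "(i+2)+(n-i-1) = (i+1)+(n-i)" using False by simp
        show ?thesis by (metis s add_mult_distrib)
      qed
      also have "\<dots> \<le> (i+1) * h i + (n-i) * h (i-1)" using b by (intro add_mono mult_le_mono2) auto
      finally show ?thesis using e1 by simp
    next
      case c: False
      have n2: "n = 2*i" using c i n1 by presburger
      define e where "e = i"
      have ne: "n = 2*e" "i = e" "1 \<le> e" using n2 i0 by (auto simp: e_def)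
      have a: "h (i+1) \<le> h i" using I4 i ne by simp
      have b: "h (i+1) \<le> h (i-1)"
      proof (cases "e = 1")
        case True then show ?thesis using I0[of "i+1"] ne by simp
      next
        case False
        have "h (n-1-(e-2)) \<le> h (e-2+1)" using I2[of "e-2"] ne False by simp
        moreover have "n-1-(e-2) = i+1" "e-2+1 = i-1" using ne False by auto
        ultimately show ?thesis by simp
      qed
      have x1: "(i+2)*h(i+1) = 2*h(i+1) + e*h(i+1)" using ne by (simp add: add_mult_distrib)
      have x2: "n-i-1 = e-1" using ne by simp
      have "?g (i+1) = 2*h(i+1) + e*h(i+1) + (e-1)*h i" unfolding e2 x1 x2 ..
      also have "\<dots> \<le> 2*h i + e*h(i-1) + (e-1)*h i" using a b by (intro add_mono mult_le_mono2) auto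
      also have "\<dots> = ?g i"
      proof -
        have y1: "(i+1)*h i = 2*h i + (e-1)*h i"
        proof -
          have "i+1 = 2 + (e-1)" using ne by simp
          then show ?thesis by (metis add_mult_distrib)
        qed
        have y2: "n-i = e" using ne by simp
        show ?thesis unfolding e1 y1 y2 by simp
      qed
      finally show ?thesis .
    qed
  qed
  show ?thesis unfolding invP_def using P0 P1 P2 P3 P4 by auto
qed

definition rv :: "nat \<Rightarrow> (nat \<Rightarrow> nat) \<Rightarrow> nat \<Rightarrow> nat" where
  "rv n h i = (if i < n then h (n-1-i) else 0)"

lemma inv_rv:
  assumes n1: "1 \<le> n" and I: "invP n h"
  shows "invP n (rv n h)"
proof -
  have I0: "\<And>i. n \<le> i \<Longrightarrow> h i = 0"
    and I1: "\<And>j. 2*j+2 \<le> n-1 \<Longrightarrow> h j \<le> h (n-2-j)"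
    and I2: "\<And>j. 2*j+2 \<le> n-1 \<Longrightarrow> h (n-1-j) \<le> h (j+1)"
    and I3: "\<And>i. i+1 \<le> (n-1) div 2 \<Longrightarrow> h i \<le> h (i+1)"
    and I4: "\<And>i. n div 2 \<le> i \<Longrightarrow> h (i+1) \<le> h i"
    using I unfolding invP_def by blast+
  let ?g = "rv n h"
  have P1: "?g j \<le> ?g (n-2-j)" if j: "2*j+2 \<le> n-1" for j
  proof -
    have "?g j = h (n-1-j)" "?g (n-2-j) = h (j+1)" using j by (auto simp: rv_def)
    then show ?thesis using I2[OF j] by simp
  qed
  have P2: "?g (n-1-j) \<le> ?g (j+1)" if j: "2*j+2 \<le> n-1" for j
  proof -
    have "?g (n-1-j) = h j" "?g (j+1) = h (n-2-j)" using j by (auto simp: rv_def)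
    then show ?thesis using I1[OF j] by simp
  qed
  have P3: "?g i \<le> ?g (i+1)" if i: "i+1 \<le> (n-1) div 2" for i
  proof -
    have g: "?g i = h (n-1-i)" "?g (i+1) = h (n-2-i)" using i by (auto simp: rv_def)
    have k: "n-1-i = (n-2-i)+1" using i by linarith
    have "n div 2 \<le> n-2-i" using i by linarith
    then have "h ((n-2-i)+1) \<le> h (n-2-i)" using I4 by blast
    then show ?thesis using g k by simp
  qed
  have P4: "?g (i+1) \<le> ?g i" if i: "n div 2 \<le> i" for i
  proof (cases "i+1 < n")
    case True
    have g: "?g (i+1) = h (n-2-i)" "?g i = h (n-1-i)" using True by (auto simp: rv_def)
    have k: "n-1-i = (n-2-i)+1" using True by linarith
    have "(n-2-i)+1 \<le> (n-1) div 2" using i True by linarith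
    then have "h (n-2-i) \<le> h ((n-2-i)+1)" using I3 by blast
    then show ?thesis using g k by simp
  next
    case False then show ?thesis by (simp add: rv_def)
  qed
  show ?thesis unfolding invP_def using P1 P2 P3 P4 by (auto simp: rv_def)
qed


lemma main_inv:
  assumes "1 \<le> n"
  shows "\<forall>r. 1 \<le> r \<and> r \<le> n \<longrightarrow> invP n (\<lambda>i. AL n i r)"
  using assms
proof (induction n rule: nat_induct_at_least)
  case base
  show ?case
  proof (intro allI impI)
    fix r assume "1 \<le> r \<and> r \<le> (1::nat)"
    have z: "AL 1 i r = 0" if "1 \<le> i" for i using AL_zero[of 1 i r] that by simp
    show "invP 1 (\<lambda>i. AL 1 i r)" unfolding invP_def using z by auto
  qed
next
  case (Suc n)
  have r1: "invP (Suc n) (\<lambda>i. AL (Suc n) i r)" if r: "1 \<le> r" "r \<le> n" for r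
  proof -
    have "(\<lambda>i. AL (Suc n) i r) = TT n (\<lambda>i. AL n i r)"
      using AL_rec[OF r] by (auto simp: TT_def)
    then show ?thesis using inv_T[of n] Suc r by simp
  qed
  show ?case
  proof (intro allI impI)
    fix r assume r: "1 \<le> r \<and> r \<le> Suc n"
    show "invP (Suc n) (\<lambda>i. AL (Suc n) i r)"
    proof (cases "r \<le> n")
      case True then show ?thesis using r r1 by simp
    next
      case False
      then have rr: "r = Suc n" using r by simp
      have e: "(\<lambda>i. AL (Suc n) i r) = rv (Suc n) (\<lambda>i. AL (Suc n) i 1)"
      proof
        fix i show "AL (Suc n) i r = rv (Suc n) (\<lambda>i. AL (Suc n) i 1) i"
        proof (cases "i < Suc n")
          case True
          then show ?thesis using AL_compl[of "Suc n" "Suc n" i] rr by (simp add: rv_def)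
        next
          case False
          then show ?thesis using AL_zero[of "Suc n" i r] by (simp add: rv_def)
        qed
      qed
      have "invP (Suc n) (\<lambda>i. AL (Suc n) i 1)" using r1[of 1] Suc by simp
      then show ?thesis using e inv_rv[of "Suc n"] by simp
    qed
  qed
qed

theorem corollary4p4:
  shows "(\<forall>d r j. 1 \<le> r \<and> r \<le> d + 1 \<and> 2 * j + 2 \<le> d
            \<longrightarrow> A (d + 1) j r \<le> A (d + 1) (d - 1 - j) r)
       \<and> (\<forall>d r. 1 \<le> d \<and> 1 \<le> r \<and> r \<le> d \<longrightarrow>
            (\<forall>i. i + 1 \<le> d div 2 \<longrightarrow> A (d + 1) i (r + 1) \<le> A (d + 1) (i + 1) (r + 1))
          \<and> (\<forall>i. (d + 1) div 2 \<le> i \<and> i + 1 \<le> d \<longrightarrow> A (d + 1) (i + 1) (r + 1) \<le> A (d + 1) i (r + 1)))"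
proof (intro conjI allI impI)
  fix d r j :: nat assume h: "1 \<le> r \<and> r \<le> d + 1 \<and> 2 * j + 2 \<le> d"
  have "invP (d+1) (\<lambda>i. AL (d+1) i r)" using main_inv[of "d+1"] h by simp
  then have "AL (d+1) j r \<le> AL (d+1) (d+1-2-j) r" unfolding invP_def using h by simp
  moreover have "d+1-2-j = d-1-j" by simp
  ultimately show "A (d + 1) j r \<le> A (d + 1) (d - 1 - j) r" by (simp add: A_AL)
next
  fix d r i :: nat assume h: "1 \<le> d \<and> 1 \<le> r \<and> r \<le> d" and i: "i + 1 \<le> d div 2"
  have "invP (d+1) (\<lambda>i. AL (d+1) i (r+1))" using main_inv[of "d+1"] h by simp
  then have "AL (d+1) i (r+1) \<le> AL (d+1) (i+1) (r+1)" unfolding invP_def using i by simp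
  then show "A (d + 1) i (r + 1) \<le> A (d + 1) (i + 1) (r + 1)" by (simp add: A_AL)
next
  fix d r i :: nat assume h: "1 \<le> d \<and> 1 \<le> r \<and> r \<le> d" and i: "(d + 1) div 2 \<le> i \<and> i + 1 \<le> d"
  have "invP (d+1) (\<lambda>i. AL (d+1) i (r+1))" using main_inv[of "d+1"] h by simp
  then have "AL (d+1) (i+1) (r+1) \<le> AL (d+1) i (r+1)" unfolding invP_def using i by simp
  then show "A (d + 1) (i + 1) (r + 1) \<le> A (d + 1) i (r + 1)" by (simp add: A_AL)
qed

end
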